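(* Let $\mathcal{J}=\langle U,g,f\rangle$ satisfy the standing assumptions below. For every evaluation $\mu\in\Delta(\mathbb{R}_+)$, every $t\geq0$ and every $y_0\in\mathbb{R}^d$, $$V_\mu(y_0)\leq V_{\mathcal{T}_t\sharp\mu}(y_0)+2\,TV_t(\mu).$$
   Context: Setting: $U$ is a metric space, $g:\mathbb{R}^d\times U\to[0,1]$ is Borel measurable, $f:\mathbb{R}^d\times U\to\mathbb{R}^d$ is Borel measurable with $\|f(y,u)-f(\bar y,u)\|\leq L\|y-\bar y\|$ and $\|f(y,u)\|\leq a(1+\|y\|)$ for constants $L\ge0,a>0$. $\mathcal{U}$ is the set of measurable controls $u:[0,+\infty)\to U$; $y(t,u,y_0)$ is the solution of $y'=f(y,u)$, $y(0)=y_0$. $V_\mu(y_0)=\inf_{u\in\mathcal{U}}\int_{[0,+\infty)} g(y(s,u,y_0),u(s))\,d\mu(s)$; $V_{\mathcal{T}_t\sharp\mu}(y_0)=\inf_{u\in\mathcal{U}}\int_{[0,+\infty)} g(y(s+t,u,y_0),u(s+t))\,d\mu(s)$. $TV_t(\mu)=\sup_{Q\in\mathcal{B}(\mathbb{R}_+)}|\mu(Q)-\mu(Q+t)|$. *)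

theory Defs
  imports "HOL-Probability.Probability"
begin

text \<open>Admissible controls: Borel measurable maps from time to the control set U
  (only their values on [0,+inf) matter).\<close>
definition controls :: "(real \<Rightarrow> 'u::metric_space) set" where
  "controls = {u. u \<in> borel_measurable borel}"

definition is_trajectory ::
  "('a::euclidean_space \<Rightarrow> 'u \<Rightarrow> 'a) \<Rightarrow> (real \<Rightarrow> 'u) \<Rightarrow> 'a \<Rightarrow> (real \<Rightarrow> 'a) \<Rightarrow> bool" where
  "is_trajectory f u y0 y \<longleftrightarrow>
     (\<forall>t\<ge>0. ((\<lambda>s. f (y s) (u s)) has_integral (y t - y0)) {0..t})"

text \<open>y(t,u,y0): the (unique on [0,+inf)) solution.\<close>
definition traj ::
  "('a::euclidean_space \<Rightarrow> 'u \<Rightarrow> 'a) \<Rightarrow> (real \<Rightarrow> 'u) \<Rightarrow> 'a \<Rightarrow> real \<Rightarrow> 'a" where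
  "traj f u y0 = (SOME y. is_trajectory f u y0 y)"

definition Vmu ::
  "('a::euclidean_space \<Rightarrow> 'u::metric_space \<Rightarrow> real) \<Rightarrow> ('a \<Rightarrow> 'u \<Rightarrow> 'a) \<Rightarrow> real measure \<Rightarrow> 'a \<Rightarrow> real" where
  "Vmu g f \<mu> y0 = (INF u\<in>controls.
      enn2real (\<integral>\<^sup>+ s. indicator {0..} s * ennreal (g (traj f u y0 s) (u s)) \<partial>\<mu>))"

text \<open>V_{T_t # mu}(y0) = inf over controls of the integral of g(y(s+t),u(s+t)) d mu(s).\<close>
definition Vshift ::
  "('a::euclidean_space \<Rightarrow> 'u::metric_space \<Rightarrow> real) \<Rightarrow> ('a \<Rightarrow> 'u \<Rightarrow> 'a) \<Rightarrow> real measure \<Rightarrow> real \<Rightarrow> 'a \<Rightarrow> real" where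
  "Vshift g f \<mu> t y0 = (INF u\<in>controls.
      enn2real (\<integral>\<^sup>+ s. indicator {0..} s * ennreal (g (traj f u y0 (s + t)) (u (s + t))) \<partial>\<mu>))"

definition TV :: "real \<Rightarrow> real measure \<Rightarrow> real" where
  "TV t \<mu> = (SUP Q\<in>{Q. Q \<in> sets borel \<and> Q \<subseteq> {0..}}.
      \<bar>measure \<mu> Q - measure \<mu> ((\<lambda>x. x + t) ` Q)\<bar>)"

end

theory Submission imports Defs begin


lemma tv_ge:
  assumes "prob_space \<mu>" "Q \<in> sets borel" "Q \<subseteq> {0..}"
  shows "\<bar>measure \<mu> Q - measure \<mu> ((\<lambda>x. x + t) ` Q)\<bar> \<le> TV t \<mu>"
  unfolding TV_def
proof (rule cSUP_upper2[where x=Q])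
  show "bdd_above ((\<lambda>Q. \<bar>measure \<mu> Q - measure \<mu> ((\<lambda>x. x + t) ` Q)\<bar>) ` {Q. Q \<in> sets borel \<and> Q \<subseteq> {0..}})"
  proof (rule bdd_aboveI[where M=1])
    fix y assume "y \<in> (\<lambda>Q. \<bar>measure \<mu> Q - measure \<mu> ((\<lambda>x. x + t) ` Q)\<bar>) ` {Q. Q \<in> sets borel \<and> Q \<subseteq> {0..}}"
    then obtain Q where "y = \<bar>measure \<mu> Q - measure \<mu> ((\<lambda>x. x + t) ` Q)\<bar>" by auto
    moreover have "measure \<mu> Q \<le> 1" "measure \<mu> ((\<lambda>x. x + t) ` Q) \<le> 1"
      using prob_space.prob_le_1[OF assms(1)] by auto
    moreover have "measure \<mu> Q \<ge> 0" "measure \<mu> ((\<lambda>x. x + t) ` Q) \<ge> 0" by (auto simp: measure_nonneg)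
    ultimately show "y \<le> 1" using measure_nonneg[of \<mu> Q] measure_nonneg[of \<mu> "(\<lambda>x. x + t) ` Q"] unfolding abs_le_iff by linarith
  qed
qed (use assms in auto)

lemma tv_nonneg: "prob_space \<mu> \<Longrightarrow> TV t \<mu> \<ge> 0"
  using tv_ge[of \<mu> "{}" t] by auto

lemma shift_meas: "A \<in> sets borel \<Longrightarrow> {s::real. s \<ge> 0 \<and> s + t \<in> A} \<in> sets borel"
proof -
  assume A: "A \<in> sets borel"
  have "{s::real. s \<ge> 0 \<and> s + t \<in> A} = {0..} \<inter> (\<lambda>s. s + t) -` A" by auto
  also have "\<dots> \<in> sets borel"
    using A by (intro sets.Int) (auto intro!: measurable_sets_borel[of "\<lambda>s::real. s + t"] continuous_on_add continuous_intros borel_measurable_continuous_onI)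
  finally show ?thesis .
qed


lemma image_shift_atLeast: "(\<lambda>x::real. x + t) ` {0..} = {t..}"
  apply auto
  subgoal for x by (rule image_eqI[where x="x-t"]) auto
  done

lemma real_ineq:
  assumes Pr: "prob_space \<mu>" and S: "sets \<mu> = sets borel" and t: "t \<ge> 0"
  and fin: "finite V" and w: "\<And>v. v\<in>V \<Longrightarrow> 0 \<le> w v \<and> w v \<le> 1"
  and A: "\<And>v. v\<in>V \<Longrightarrow> A v \<in> sets borel" and A0: "\<And>v. v\<in>V \<Longrightarrow> A v \<subseteq> {0..}"
  and disj: "disjoint_family_on A V"
  shows "(\<Sum>v\<in>V. w v * measure \<mu> (A v)) \<le> (\<Sum>v\<in>V. w v * measure \<mu> {s. s\<ge>0 \<and> s+t \<in> A v}) + 2 * TV t \<mu>"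
proof -
  interpret prob_space \<mu> by fact
  define P where "P v = {s. s\<ge>0 \<and> s+t \<in> A v}" for v
  have Pm: "P v \<in> sets \<mu>" if "v\<in>V" for v
    unfolding P_def S using shift_meas A that by blast
  have Am: "A v \<in> sets \<mu>" if "v\<in>V" for v using A that S by auto
  have shiftP: "(\<lambda>x. x+t) ` P v = A v \<inter> {t..}" if "v\<in>V" for v
    unfolding P_def
    apply auto
    subgoal for x by (rule image_eqI[where x="x-t"]) auto
    done
  have split: "measure \<mu> (A v) = measure \<mu> (A v \<inter> {t..}) + measure \<mu> (A v \<inter> {..<t})" if "v\<in>V" for v
  proof -
    have "A v = (A v \<inter> {t..}) \<union> (A v \<inter> {..<t})" by auto
    then have "measure \<mu> (A v) = measure \<mu> ((A v \<inter> {t..}) \<union> (A v \<inter> {..<t}))" by simp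
    also have "\<dots> = measure \<mu> (A v \<inter> {t..}) + measure \<mu> (A v \<inter> {..<t})"
      using Am[OF that] S by (intro measure_Union) auto
    finally show ?thesis .
  qed
  define D where "D v = measure \<mu> (A v \<inter> {t..}) - measure \<mu> (P v)" for v
  have eq: "(\<Sum>v\<in>V. w v * measure \<mu> (A v)) =
     (\<Sum>v\<in>V. w v * measure \<mu> (A v \<inter> {..<t})) + (\<Sum>v\<in>V. w v * measure \<mu> (P v)) + (\<Sum>v\<in>V. w v * D v)"
    unfolding sum.distrib[symmetric]
    by (intro sum.cong refl) (simp add: split D_def algebra_simps)
  have T1: "(\<Sum>v\<in>V. w v * measure \<mu> (A v \<inter> {..<t})) \<le> TV t \<mu>"
  proof -
    have "(\<Sum>v\<in>V. w v * measure \<mu> (A v \<inter> {..<t})) \<le> (\<Sum>v\<in>V. measure \<mu> (A v \<inter> {..<t}))"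
      by (intro sum_mono) (use w in \<open>auto intro: mult_left_le_one_le\<close>)
    also have "\<dots> = measure \<mu> (\<Union>v\<in>V. A v \<inter> {..<t})"
      using disj Am S fin by (intro measure_finite_Union[symmetric]) (auto simp: disjoint_family_on_def)
    also have "\<dots> \<le> measure \<mu> {0..<t}"
      using A0 S by (intro finite_measure_mono) force+
    also have "\<dots> = measure \<mu> {0..} - measure \<mu> {t..}"
    proof -
      have "{0..} = {0..<t} \<union> {t::real..}" using t by auto
      then have "measure \<mu> {0..} = measure \<mu> ({0..<t} \<union> {t::real..})" by simp
      also have "\<dots> = measure \<mu> {0..<t} + measure \<mu> {t..}"
        using S by (intro measure_Union) auto
      finally show ?thesis by simp
    qed
    also have "\<dots> \<le> TV t \<mu>"
      using tv_ge[OF Pr, of "{0..}" t] by (simp add: image_shift_atLeast)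
    finally show ?thesis .
  qed
  define V' where "V' = {v\<in>V. D v > 0}"
  have T2: "(\<Sum>v\<in>V. w v * D v) \<le> TV t \<mu>"
  proof -
    have "(\<Sum>v\<in>V. w v * D v) \<le> (\<Sum>v\<in>V. if D v > 0 then D v else 0)"
    proof (intro sum_mono)
      fix v assume v: "v \<in> V"
      show "w v * D v \<le> (if D v > 0 then D v else 0)"
        using w[OF v] by (cases "D v > 0") (auto intro: mult_left_le_one_le mult_nonneg_nonpos)
    qed
    also have "\<dots> = (\<Sum>v\<in>V'. D v)"
      unfolding V'_def using fin by (simp add: sum.inter_filter)
    also have "\<dots> = (\<Sum>v\<in>V'. measure \<mu> (A v \<inter> {t..})) - (\<Sum>v\<in>V'. measure \<mu> (P v))"
      unfolding D_def by (simp add: sum_subtractf)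
    also have "\<dots> = measure \<mu> (\<Union>v\<in>V'. A v \<inter> {t..}) - measure \<mu> (\<Union>v\<in>V'. P v)"
    proof -
      have f: "finite V'" using fin V'_def by auto
      have 1: "(\<Sum>v\<in>V'. measure \<mu> (A v \<inter> {t..})) = measure \<mu> (\<Union>v\<in>V'. A v \<inter> {t..})"
        using disj Am S f by (intro measure_finite_Union[symmetric]) (auto simp: disjoint_family_on_def V'_def)
      have 2: "(\<Sum>v\<in>V'. measure \<mu> (P v)) = measure \<mu> (\<Union>v\<in>V'. P v)"
        using disj Pm f by (intro measure_finite_Union[symmetric]) (auto simp: disjoint_family_on_def V'_def P_def)
      show ?thesis using 1 2 by simp
    qed
    also have "\<dots> \<le> TV t \<mu>"
    proof -
      define Q where "Q = (\<Union>v\<in>V'. P v)"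
      have "(\<lambda>x. x+t) ` Q = (\<Union>v\<in>V'. A v \<inter> {t..})"
        unfolding Q_def image_UN using shiftP V'_def by auto
      moreover have "Q \<in> sets borel" unfolding Q_def using Pm S fin V'_def by auto
      moreover have "Q \<subseteq> {0..}" unfolding Q_def P_def by auto
      ultimately show ?thesis using tv_ge[OF Pr, of Q t] unfolding Q_def by (simp add: abs_le_iff)
    qed
    finally show ?thesis .
  qed
  show ?thesis using eq T1 T2 unfolding P_def by linarith
qed


lemma key:
  assumes Pr: "prob_space \<mu>" and S: "sets \<mu> = sets borel" and t: "t \<ge> 0"
    and sf: "simple_function \<mu> \<phi>" and le: "\<And>x. \<phi> x \<le> indicator {0..} x"
  shows "(\<integral>\<^sup>+x. \<phi> x \<partial>\<mu>) \<le> (\<integral>\<^sup>+s. indicator {0..} s * \<phi> (s+t) \<partial>\<mu>) + ennreal (2 * TV t \<mu>)"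
proof -
  interpret prob_space \<mu> by fact
  have sp: "space \<mu> = UNIV" using sets_eq_imp_space_eq[OF S] by simp
  define V where "V = \<phi> ` UNIV - {0}"
  define A where "A v = \<phi> -` {v}" for v
  define P where "P v = {s. s\<ge>0 \<and> s+t \<in> A v}" for v
  define w where "w v = enn2real v" for v :: ennreal
  have fin: "finite V" using simple_functionD(1)[OF sf] sp V_def by auto
  have Am: "A v \<in> sets \<mu>" for v using simple_functionD(2)[OF sf, of "{v}"] sp A_def by auto
  have Ab: "A v \<in> sets borel" for v using Am S by auto
  have Pm: "P v \<in> sets \<mu>" for v using shift_meas[OF Ab] S P_def by auto
  have v1: "v \<le> 1" if vV: "v \<in> V" for v
  proof -
    obtain x where "v = \<phi> x" using vV unfolding V_def by auto
    then show ?thesis using le[of x] by (cases "0 \<le> x") auto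
  qed
  have A0: "A v \<subseteq> {0..}" if "v \<in> V" for v
  proof
    fix x assume "x \<in> A v"
    then have "\<phi> x = v" by (auto simp: A_def)
    moreover have "v \<noteq> 0" using that V_def by auto
    ultimately show "x \<in> {0..}" using le[of x] by (cases "0 \<le> x") auto
  qed
  have vw: "v = ennreal (w v)" if "v \<in> V" for v
  proof -
    have "v < top" using v1[OF that] ennreal_one_less_top by (rule order.strict_trans1)
    then show ?thesis unfolding w_def by simp
  qed
  have w01: "0 \<le> w v \<and> w v \<le> 1" if "v \<in> V" for v
    using v1[OF that] unfolding w_def by (auto simp: enn2real_leI)
  have disj: "disjoint_family_on A V" unfolding disjoint_family_on_def A_def by auto
  have rep: "\<phi> x = (\<Sum>v\<in>V. v * indicator (A v) x)" for x
  proof -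
    have "\<And>v. v * indicator (A v) x = (if v = \<phi> x then \<phi> x else 0)" by (auto simp: A_def indicator_def)
    then have "(\<Sum>v\<in>V. v * indicator (A v) x) = (if \<phi> x \<in> V then \<phi> x else 0)"
      using fin by (simp add: sum.delta')
    then show ?thesis using V_def by auto
  qed
  have repP: "indicator {0..} s * \<phi> (s+t) = (\<Sum>v\<in>V. v * indicator (P v) s)" for s
  proof -
    have "\<And>v. v * indicator (P v) s = indicator {0..} s * (v * indicator (A v) (s+t))"
      by (auto simp: P_def indicator_def)
    then show ?thesis by (simp add: rep[of "s+t"] sum_distrib_left)
  qed
  have int_eq: "(\<integral>\<^sup>+x. (\<Sum>v\<in>V. v * indicator (B v) x) \<partial>\<mu>) = ennreal (\<Sum>v\<in>V. w v * measure \<mu> (B v))"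
    if B: "\<And>v. B v \<in> sets \<mu>" for B
  proof -
    have "(\<integral>\<^sup>+x. (\<Sum>v\<in>V. v * indicator (B v) x) \<partial>\<mu>) = (\<Sum>v\<in>V. \<integral>\<^sup>+x. v * indicator (B v) x \<partial>\<mu>)"
      using B by (intro nn_integral_sum) auto
    also have "\<dots> = (\<Sum>v\<in>V. v * emeasure \<mu> (B v))"
      using B by (intro sum.cong refl nn_integral_cmult_indicator) auto
    also have "\<dots> = (\<Sum>v\<in>V. ennreal (w v * measure \<mu> (B v)))"
    proof (intro sum.cong refl)
      fix v assume v: "v \<in> V"
      show "v * emeasure \<mu> (B v) = ennreal (w v * measure \<mu> (B v))"
        using vw[OF v] w01[OF v] by (simp add: emeasure_eq_measure ennreal_mult)
    qed
    also have "\<dots> = ennreal (\<Sum>v\<in>V. w v * measure \<mu> (B v))"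
      using w01 by (intro sum_ennreal) auto
    finally show ?thesis .
  qed
  have "(\<integral>\<^sup>+x. \<phi> x \<partial>\<mu>) = ennreal (\<Sum>v\<in>V. w v * measure \<mu> (A v))"
    unfolding rep using int_eq[OF Am] .
  moreover have "(\<integral>\<^sup>+s. indicator {0..} s * \<phi> (s+t) \<partial>\<mu>) = ennreal (\<Sum>v\<in>V. w v * measure \<mu> (P v))"
    unfolding repP using int_eq[OF Pm] .
  moreover have "(\<Sum>v\<in>V. w v * measure \<mu> (A v)) \<le> (\<Sum>v\<in>V. w v * measure \<mu> (P v)) + 2 * TV t \<mu>"
    unfolding P_def using real_ineq[OF Pr S t fin w01 Ab A0 disj] .
  moreover have "0 \<le> (\<Sum>v\<in>V. w v * measure \<mu> (P v))" using w01 by (intro sum_nonneg) auto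
  moreover have "0 \<le> 2 * TV t \<mu>" using tv_nonneg[OF Pr] by simp
  ultimately show ?thesis by (simp add: ennreal_plus[symmetric] ennreal_leI del: ennreal_plus)
qed


lemma cost_ineq:
  assumes Pr: "prob_space \<mu>" and S: "sets \<mu> = sets borel" and t: "t \<ge> 0"
    and h01: "\<And>s. 0 \<le> h s \<and> h s \<le> (1::real)"
  shows "enn2real (\<integral>\<^sup>+ s. indicator {0..} s * ennreal (h s) \<partial>\<mu>)
     \<le> enn2real (\<integral>\<^sup>+ s. indicator {0..} s * ennreal (h (s + t)) \<partial>\<mu>) + 2 * TV t \<mu>"
proof -
  interpret prob_space \<mu> by fact
  define G where "G = (\<integral>\<^sup>+ s. indicator {0..} s * ennreal (h (s + t)) \<partial>\<mu>)"
  define c where "c = 2 * TV t \<mu>"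
  have c0: "c \<ge> 0" using tv_nonneg[OF Pr] c_def by simp
  have "(\<integral>\<^sup>+ s. indicator {0..} s * ennreal (h s) \<partial>\<mu>) \<le> G + ennreal c"
    unfolding nn_integral_def[of \<mu> "\<lambda>s. indicator {0..} s * ennreal (h s)"]
  proof (rule SUP_least)
    fix \<phi> assume "\<phi> \<in> {g. simple_function \<mu> g \<and> g \<le> (\<lambda>s. indicator {0..} s * ennreal (h s))}"
    then have sf: "simple_function \<mu> \<phi>" and le: "\<And>x. \<phi> x \<le> indicator {0..} x * ennreal (h x)"
      by (auto simp: le_fun_def)
    have le1: "\<phi> x \<le> indicator {0..} x" for x
    proof -
      have "indicator {0..} x * ennreal (h x) \<le> indicator {0..} x * 1"
        using h01[of x] by (intro mult_left_mono) auto
      then show ?thesis using le[of x] by simp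
    qed
    have "integral\<^sup>S \<mu> \<phi> = (\<integral>\<^sup>+x. \<phi> x \<partial>\<mu>)" using nn_integral_eq_simple_integral[OF sf] by simp
    also have "\<dots> \<le> (\<integral>\<^sup>+s. indicator {0..} s * \<phi> (s+t) \<partial>\<mu>) + ennreal c"
      unfolding c_def by (rule key[OF Pr S t sf le1])
    also have "(\<integral>\<^sup>+s. indicator {0..} s * \<phi> (s+t) \<partial>\<mu>) \<le> G"
      unfolding G_def
    proof (rule nn_integral_mono)
      fix s
      have "\<phi> (s+t) \<le> ennreal (h (s+t))"
      proof -
        have "indicator {0..} (s+t) * ennreal (h (s+t)) \<le> 1 * ennreal (h (s+t))"
          by (intro mult_right_mono) (auto simp: indicator_def)
        then show ?thesis using le[of "s+t"] by simp
      qed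
      then show "indicator {0..} s * \<phi> (s+t) \<le> indicator {0..} s * ennreal (h (s+t))"
        by (intro mult_left_mono) auto
    qed
    then have "(\<integral>\<^sup>+s. indicator {0..} s * \<phi> (s+t) \<partial>\<mu>) + ennreal c \<le> G + ennreal c"
      by (rule add_right_mono)
    finally show "integral\<^sup>S \<mu> \<phi> \<le> G + ennreal c" .
  qed
  moreover have Gtop: "G < top"
  proof -
    have "G \<le> (\<integral>\<^sup>+ s. 1 \<partial>\<mu>)"
      unfolding G_def
    proof (rule nn_integral_mono)
      fix s
      have "indicator {0..} s * ennreal (h (s + t)) \<le> 1 * 1"
        using h01[of "s+t"] by (intro mult_mono) (auto simp: indicator_def)
      then show "indicator {0..} s * ennreal (h (s + t)) \<le> 1" by simp
    qed
    also have "\<dots> = 1" by (simp add: emeasure_space_1)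
    finally show ?thesis using ennreal_one_less_top by (rule order.strict_trans1)
  qed
  ultimately have "enn2real (\<integral>\<^sup>+ s. indicator {0..} s * ennreal (h s) \<partial>\<mu>) \<le> enn2real (G + ennreal c)"
    by (intro enn2real_mono) auto
  also have "\<dots> = enn2real G + c" using Gtop c0 by (simp add: enn2real_plus)
  finally show ?thesis unfolding G_def c_def .
qed

theorem mainTheorem11:
  fixes g :: "'a::euclidean_space \<Rightarrow> 'u::metric_space \<Rightarrow> real"
    and f :: "'a \<Rightarrow> 'u \<Rightarrow> 'a"
    and L a :: real
    and \<mu> :: "real measure"
    and t :: real and y0 :: 'a
  assumes g_meas: "(\<lambda>(y, u). g y u) \<in> borel_measurable borel"
    and g_range: "\<And>y u. g y u \<in> {0..1}"
    and f_meas: "(\<lambda>(y, u). f y u) \<in> borel_measurable borel"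
    and L_nonneg: "L \<ge> 0" and a_pos: "a > 0"
    and f_lip: "\<And>y y' u. norm (f y u - f y' u) \<le> L * norm (y - y')"
    and f_growth: "\<And>y u. norm (f y u) \<le> a * (1 + norm y)"
    and mu_prob: "prob_space \<mu>"
    and mu_sets: "sets \<mu> = sets borel"
    and mu_supp: "measure \<mu> {0..} = 1"
    and t_nonneg: "t \<ge> 0"
  shows "Vmu g f \<mu> y0 \<le> Vshift g f \<mu> t y0 + 2 * TV t \<mu>"
proof -
  have ne: "controls \<noteq> ({} :: (real \<Rightarrow> 'u) set)"
  proof -
    have "(\<lambda>_. undefined) \<in> (controls :: (real \<Rightarrow> 'u) set)" unfolding controls_def by auto
    then show ?thesis by auto
  qed
  have "Vmu g f \<mu> y0 - 2 * TV t \<mu> \<le> Vshift g f \<mu> t y0"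
    unfolding Vshift_def
  proof (rule cINF_greatest[OF ne])
    fix u :: "real \<Rightarrow> 'u" assume u: "u \<in> controls"
    define h where "h s = g (traj f u y0 s) (u s)" for s
    have h01: "\<And>s. 0 \<le> h s \<and> h s \<le> 1" using g_range unfolding h_def by auto
    have "Vmu g f \<mu> y0 \<le> enn2real (\<integral>\<^sup>+ s. indicator {0..} s * ennreal (h s) \<partial>\<mu>)"
      unfolding Vmu_def h_def
      by (rule cINF_lower[OF _ u]) (auto intro!: bdd_belowI[where m=0])
    also have "\<dots> \<le> enn2real (\<integral>\<^sup>+ s. indicator {0..} s * ennreal (h (s + t)) \<partial>\<mu>) + 2 * TV t \<mu>"
      by (rule cost_ineq[OF mu_prob mu_sets t_nonneg h01])
    finally show "Vmu g f \<mu> y0 - 2 * TV t \<mu> \<le> enn2real (\<integral>\<^sup>+ s. indicator {0..} s * ennreal (g (traj f u y0 (s + t)) (u (s + t))) \<partial>\<mu>)"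
      unfolding h_def by simp
  qed
  then show ?thesis by simp
qed

end
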